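(* Let $p,q$ be relatively prime non-zero integers with $q>0$ and $|p|>1$. (i) For $i\in\{1,\dots,|p|-1\}$ and $s\in\mathbb Z$, $$\varphi_i(s)-\varphi_{i-1}(s)=\begin{cases}1 & \text{if } i\equiv sq\pmod p,\\ -1 & \text{if } i\equiv (s+1)q\pmod p,\\ 0&\text{otherwise,}\end{cases}$$ and the two congruences $i\equiv sq$ and $i\equiv (s+1)q\pmod p$ are mutually exclusive. (ii) Let $g$ be a positive integer with $|p|\ge 2g+1$ and $\mu$ an integer with $0<\mu\le g$. Then for every $i\in\{1,\dots,|p|-1\}$, $$\sum_{|s|<\mu}\varphi_i(s)-\sum_{|s|<\mu}\varphi_{i-1}(s)=\begin{cases}1&\text{if } i\equiv(-\mu+1)q\pmod p,\\ -1 &\text{if } i\equiv \mu q\pmod p,\\ 0&\text{otherwise.}\end{cases}$$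
   Context: For relatively prime non-zero integers $p,q$ and $i\in\mathbb Z$, $\varphi_i(s)$ denotes the cardinality of the set $\{n\in\mathbb Z:\lfloor\frac{i+pn}{q}\rfloor=s\}$. *)

theory Defs
  imports Complex_Main "HOL-Number_Theory.Cong"
begin

definition phi :: "int \<Rightarrow> int \<Rightarrow> int \<Rightarrow> int \<Rightarrow> nat" where
  "phi p q i s = card {n::int. floor (real_of_int (i + p * n) / real_of_int q) = s}"

end

theory Submission imports Defs begin

definition cnt :: "int \<Rightarrow> int \<Rightarrow> int \<Rightarrow> int \<Rightarrow> nat" where
  "cnt p i a b = card {m. a \<le> m \<and> m < b \<and> [m = i] (mod p)}"

lemma fin_cnt: "finite {m::int. a \<le> m \<and> m < b \<and> P m}"
  by (rule finite_subset[of _ "{a..<b}"]) auto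

lemma div_eq_iff: assumes "(q::int) > 0" shows "(k div q = s) \<longleftrightarrow> s*q \<le> k \<and> k < s*q + q"
proof
  assume "k div q = s"
  moreover have "k = q * (k div q) + k mod q" by simp
  moreover have "0 \<le> k mod q" "k mod q < q" using assms by auto
  ultimately show "s*q \<le> k \<and> k < s*q + q" by (metis add.commute add_less_cancel_left le_add_same_cancel2 mult.commute)
next
  assume h: "s*q \<le> k \<and> k < s*q + q"
  define r where "r = k - s*q"
  have r: "0 \<le> r" "r < q" "k = r + s*q" using h by (auto simp: r_def)
  have "k div q = r div q + s" using r(3) assms by simp
  also have "r div q = 0" using r by simp
  finally show "k div q = s" by simp
qed

lemma phi_cnt:
  assumes "q > 0" "p \<noteq> 0"
  shows "phi p q i s = cnt p i (s*q) (s*q+q)"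
proof -
  have "{m. s*q \<le> m \<and> m < s*q+q \<and> [m = i] (mod p)} =
        (\<lambda>n. i + p*n) ` {n::int. floor (real_of_int (i + p * n) / real_of_int q) = s}"
  proof (intro set_eqI iffI)
    fix m assume "m \<in> {m. s*q \<le> m \<and> m < s*q+q \<and> [m = i] (mod p)}"
    then have h: "s*q \<le> m" "m < s*q+q" "[i = m] (mod p)" by (auto simp: cong_sym_eq)
    then obtain k where "m = i + p*k" using cong_iff_lin by blast
    moreover have "floor (real_of_int (i + p * k) / real_of_int q) = s"
      unfolding floor_divide_of_int_eq using h assms \<open>m = i + p*k\<close> by (simp add: div_eq_iff)
    ultimately show "m \<in> (\<lambda>n. i + p*n) ` {n::int. floor (real_of_int (i + p * n) / real_of_int q) = s}"
      by blast
  next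
    fix m assume "m \<in> (\<lambda>n. i + p*n) ` {n::int. floor (real_of_int (i + p * n) / real_of_int q) = s}"
    then obtain n where "m = i + p*n" "floor (real_of_int (i + p * n) / real_of_int q) = s"
      by blast
    then have "m = i + p*n" "(i + p*n) div q = s" unfolding floor_divide_of_int_eq by auto
    moreover have "[i = i + p*n] (mod p)" using cong_iff_lin by blast
    ultimately show "m \<in> {m. s*q \<le> m \<and> m < s*q+q \<and> [m = i] (mod p)}"
      using assms by (auto simp: div_eq_iff cong_sym_eq)
  qed
  moreover have "inj (\<lambda>n. i + p*n)" using assms by (auto simp: inj_def)
  ultimately show ?thesis unfolding phi_def cnt_def
    by (metis (no_types, lifting) card_image inj_on_subset subset_UNIV)
qed

lemma cnt_shift: "cnt p (i-1) a b = cnt p i (a+1) (b+1)"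
proof -
  have "{m. a+1 \<le> m \<and> m < b+1 \<and> [m = i] (mod p)} = (\<lambda>m. m+1) ` {m. a \<le> m \<and> m < b \<and> [m = i-1] (mod p)}"
  proof (intro set_eqI iffI)
    fix x assume "x \<in> {m. a+1 \<le> m \<and> m < b+1 \<and> [m = i] (mod p)}"
    then have "x - 1 \<in> {m. a \<le> m \<and> m < b \<and> [m = i-1] (mod p)}"
      by (auto intro: cong_diff)
    then show "x \<in> (\<lambda>m. m+1) ` {m. a \<le> m \<and> m < b \<and> [m = i-1] (mod p)}"
      by (metis (lifting) diff_add_cancel image_eqI)
  next
    fix x assume "x \<in> (\<lambda>m. m+1) ` {m. a \<le> m \<and> m < b \<and> [m = i-1] (mod p)}"
    then obtain y where "x = y+1" "a \<le> y" "y < b" "[y = i-1] (mod p)" by auto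
    then show "x \<in> {m. a+1 \<le> m \<and> m < b+1 \<and> [m = i] (mod p)}"
      using cong_add[of y "i-1" p 1 1] by auto
  qed
  then show ?thesis unfolding cnt_def by (simp add: card_image)
qed

lemma cnt_low: assumes "a < b"
  shows "int (cnt p i a b) = (if [a = i] (mod p) then 1 else 0) + int (cnt p i (a+1) b)"
proof -
  have e: "{m. a \<le> m \<and> m < b \<and> [m = i] (mod p)} =
    (if [a = i] (mod p) then insert a else id) {m. a+1 \<le> m \<and> m < b \<and> [m = i] (mod p)}"
    using assms by (auto simp: order_le_less)
  show ?thesis unfolding cnt_def e by (simp add: fin_cnt)
qed

lemma cnt_high: assumes "a \<le> b"
  shows "int (cnt p i a (b+1)) = int (cnt p i a b) + (if [b = i] (mod p) then 1 else 0)"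
proof -
  have e: "{m. a \<le> m \<and> m < b+1 \<and> [m = i] (mod p)} =
    (if [b = i] (mod p) then insert b else id) {m. a \<le> m \<and> m < b \<and> [m = i] (mod p)}"
    using assms by (auto simp: order_le_less)
  show ?thesis unfolding cnt_def e by (simp add: fin_cnt)
qed

lemma phi_diff:
  assumes "q > 0" "p \<noteq> 0"
  shows "int (phi p q i s) - int (phi p q (i - 1) s) =
     (if [i = s*q] (mod p) then 1 else 0) - (if [i = (s+1)*q] (mod p) then 1 else 0)"
proof -
  have "int (phi p q i s) - int (phi p q (i - 1) s) = int (cnt p i (s*q) (s*q+q)) - int (cnt p i (s*q+1) (s*q+q+1))"
    using assms by (simp add: phi_cnt cnt_shift)
  also have "\<dots> = (if [s*q = i] (mod p) then 1 else 0) - (if [s*q+q = i] (mod p) then 1 else 0)"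
    using cnt_low[of "s*q" "s*q+q" p i] cnt_high[of "s*q+1" "s*q+q" p i] assms by simp
  finally show ?thesis by (simp add: cong_sym_eq distrib_right)
qed

lemma tele: "(\<Sum>s\<in>{a..<a+int k}. (h s - h (s+1))) = (h a - h (a + int k) :: int)"
proof (induction k)
  case 0 then show ?case by simp
next
  case (Suc k)
  have "{a..<a+int (Suc k)} = insert (a + int k) {a..<a+int k}" by auto
  then show ?case using Suc by (simp add: algebra_simps)
qed


theorem lemma3p2:
  fixes p q :: int
  assumes "coprime p q" and "p \<noteq> 0" and "q \<noteq> 0" and "q > 0" and "\<bar>p\<bar> > 1"
  shows "(\<forall>i s. 1 \<le> i \<and> i \<le> \<bar>p\<bar> - 1 \<longrightarrow>
            int (phi p q i s) - int (phi p q (i - 1) s) =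
              (if [i = s * q] (mod p) then 1
               else if [i = (s + 1) * q] (mod p) then -1 else 0)
            \<and> \<not> ([i = s * q] (mod p) \<and> [i = (s + 1) * q] (mod p)))
       \<and> (\<forall>g \<mu> i. g > 0 \<and> \<bar>p\<bar> \<ge> 2 * g + 1 \<and> 0 < \<mu> \<and> \<mu> \<le> g
            \<and> 1 \<le> i \<and> i \<le> \<bar>p\<bar> - 1 \<longrightarrow>
            (\<Sum>s\<in>{s::int. \<bar>s\<bar> < \<mu>}. int (phi p q i s))
              - (\<Sum>s\<in>{s::int. \<bar>s\<bar> < \<mu>}. int (phi p q (i - 1) s)) =
              (if [i = (- \<mu> + 1) * q] (mod p) then 1
               else if [i = \<mu> * q] (mod p) then -1 else 0))"
proof -
  have excl: "\<not> ([i = s * q] (mod p) \<and> [i = (s + 1) * q] (mod p))" for i s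
  proof
    assume h: "[i = s * q] (mod p) \<and> [i = (s + 1) * q] (mod p)"
    then have "[s * q = (s + 1) * q] (mod p)" by (metis cong_sym cong_trans)
    then have "p dvd q" by (simp add: cong_iff_dvd_diff distrib_right)
    then have "is_unit p" using assms(1) by (meson coprime_common_divisor dvd_refl)
    then show False using assms(5) by auto
  qed
  define h where "h i s = (if [i = s*q] (mod p) then 1 else (0::int))" for i s
  have d: "int (phi p q i s) - int (phi p q (i - 1) s) = h i s - h i (s+1)" for i s
    unfolding h_def using phi_diff[OF assms(4) assms(2)] by simp
  have part1: "int (phi p q i s) - int (phi p q (i - 1) s) =
              (if [i = s * q] (mod p) then 1
               else if [i = (s + 1) * q] (mod p) then -1 else 0)" for i s
    unfolding d h_def using excl[of i s] by auto
  have part2: "(\<Sum>s\<in>{s::int. \<bar>s\<bar> < \<mu>}. int (phi p q i s))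
              - (\<Sum>s\<in>{s::int. \<bar>s\<bar> < \<mu>}. int (phi p q (i - 1) s)) =
              (if [i = (- \<mu> + 1) * q] (mod p) then 1
               else if [i = \<mu> * q] (mod p) then -1 else 0)"
    if "g > 0" "\<bar>p\<bar> \<ge> 2 * g + 1" "0 < \<mu>" "\<mu> \<le> g" for g \<mu> i
  proof -
    have S: "{s::int. \<bar>s\<bar> < \<mu>} = {-\<mu>+1..<(-\<mu>+1) + int (nat (2*\<mu>-1))}"
      using that by auto
    have "(\<Sum>s\<in>{s::int. \<bar>s\<bar> < \<mu>}. int (phi p q i s))
              - (\<Sum>s\<in>{s::int. \<bar>s\<bar> < \<mu>}. int (phi p q (i - 1) s))
          = (\<Sum>s\<in>{s::int. \<bar>s\<bar> < \<mu>}. h i s - h i (s+1))"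
      by (simp only: sum_subtractf[symmetric] d)
    also have "\<dots> = h i (-\<mu>+1) - h i \<mu>"
      unfolding S tele using that by simp
    finally have e: "(\<Sum>s\<in>{s::int. \<bar>s\<bar> < \<mu>}. int (phi p q i s))
              - (\<Sum>s\<in>{s::int. \<bar>s\<bar> < \<mu>}. int (phi p q (i - 1) s)) = h i (-\<mu>+1) - h i \<mu>" .
    have nb: "\<not> ([i = (- \<mu> + 1) * q] (mod p) \<and> [i = \<mu> * q] (mod p))"
    proof
      assume hh: "[i = (- \<mu> + 1) * q] (mod p) \<and> [i = \<mu> * q] (mod p)"
      then have "[\<mu> * q = (- \<mu> + 1) * q] (mod p)" by (metis cong_sym cong_trans)
      then have "p dvd (2*\<mu> - 1) * q"
        by (simp add: cong_iff_dvd_diff algebra_simps)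
      then have "p dvd (2*\<mu> - 1)" using assms(1)
        using coprime_dvd_mult_left_iff by blast
      then have "\<bar>p\<bar> \<le> 2*\<mu> - 1" using that
        using dvd_imp_le_int[of "2*\<mu> - 1" p] by simp
      then show False using that by linarith
    qed
    show ?thesis unfolding e h_def using nb by auto
  qed
  show ?thesis using part1 part2 excl by blast
qed

end
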